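(* Let $\mathcal{A}$ be a finite alphabet, $n\ge0$, and $N=[1,n]=\{1,\dots,n\}$. Then (i) $|\overline{L}_{\mathcal{A}}(n)/\mathcal{S}_{\mathcal{A}}|=|\overline{G}_{\mathcal{A}}(N)/\hat{\mathcal{S}}_{\mathcal{A}}(n+1)|=|\overline{G}_{\mathcal{A}}(N)/{\sim}|=|\overline{G}_{\mathcal{A}}(N)/{\cong}|$; (ii) $|L_{\mathcal{A}}(n)/\mathcal{S}_{\mathcal{A}}|=|G_{\mathcal{A}}(N)/\hat{\mathcal{S}}_{\mathcal{A}}(n+1)|$; (iii) $|\overline{G}_{\mathcal{A}}(N)/\hat{\mathcal{S}}_{\mathcal{A}}(n+1)|\le|G_{\mathcal{A}}(N)/{\sim}|\le|G_{\mathcal{A}}(N)/{\cong}|\le|G_{\mathcal{A}}(N)/\hat{\mathcal{S}}_{\mathcal{A}}(n+1)|$.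
   Context: $L_{\mathcal{A}}(n)$ is the set of $f:\mathcal{A}^n\to\mathcal{A}$; $\overline{L}_{\mathcal{A}}(n)$ the irreducible ones (depending on every argument). $\mathcal{S}_{\mathcal{A}}=\{1,r\}\times S_{\mathcal{A}}$ ($S_{\mathcal{A}}$ the permutations of $\mathcal{A}$) acts on rules by $\hat\nu f(w)=\nu f(\nu^{-1}w)$ (letterwise) and $\hat rf(w)=f(rw)$, $r$ reversing words. For $f:\mathcal{A}^n\to\mathcal{A}$, $\Phi^N_f(x)_i=f(x_{i+1}\dots x_{i+n})$; $G_{\mathcal{A}}(N)=\{\Phi^N_f\mid f\in L_{\mathcal{A}}(n)\}$, $\overline{G}_{\mathcal{A}}(N)=\{\Phi^N_f\mid f\in\overline{L}_{\mathcal{A}}(n)\}$. Operators on global maps: $\sigma\Phi=\sigma\circ\Phi$ with $(\sigma x)_i=x_{i+1}$; $\hat\nu\Phi(x)=\nu\Phi(\nu^{-1}x)$; $\hat r\Phi(x)=r\Phi(rx)$ with $(rx)_i=x_{-i}$. $\hat{\mathcal{S}}_{\mathcal{A}}(n+1)$ is the group generated by $\sigma^{n+1}\hat r$ and all $\hat\nu$, $\nu\in S_{\mathcal{A}}$; it acts on $G_{\mathcal{A}}(N)$ and on $\overline G_{\mathcal{A}}(N)$. $\Phi\cong\Psi$ iff $\Psi=\tau\Phi$ for some $\tau$ in the group generated by $\sigma,\hat r,\hat\nu$. Scaling: for positive rational $v$ and a global map with a representation $\Phi=\Phi^M_f$, $vM\subseteq\mathbb{Z}$, put $\hat s_v\Phi=\Phi^{vM}_f$;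 $\Phi\sim\Psi$ iff there exist global maps $\Phi',\Psi'$ and a positive rational $v$ with $\Phi\cong\Phi'$, $\Psi\cong\Psi'$, $\Psi'=\hat s_v\Phi'$. For a set $X$ of global maps, $X/{\cong}$ and $X/{\sim}$ denote the classes of the restricted relations, and $X/\hat{\mathcal{S}}_{\mathcal{A}}(n+1)$ the orbits. *)

theory Defs
  imports Complex_Main
begin

type_synonym 'a cfg = "int \<Rightarrow> 'a"
type_synonym 'a gmap = "'a cfg \<Rightarrow> 'a cfg"

text \<open>L_A(n): functions A^n -> A, represented as functions on words (lists) that are
  undefined (extensionally) off words of length n.\<close>
definition Lrules :: "nat \<Rightarrow> ('a list \<Rightarrow> 'a) set" where
  "Lrules n = {f. \<forall>w. length w \<noteq> n \<longrightarrow> f w = undefined}"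

definition Lbar :: "nat \<Rightarrow> ('a list \<Rightarrow> 'a) set" where
  "Lbar n = {f \<in> Lrules n. \<forall>i<n. \<exists>w a. length w = n \<and> f (w[i := a]) \<noteq> f w}"

text \<open>Orbit relation of S_A = {1,r} x S_A acting by
  (r^b, nu) f (w) = nu (f (nu^-1 (r^b w))).\<close>
definition rule_orbit_rel :: "nat \<Rightarrow> ('a list \<Rightarrow> 'a) \<Rightarrow> ('a list \<Rightarrow> 'a) \<Rightarrow> bool" where
  "rule_orbit_rel n f g \<longleftrightarrow> (\<exists>\<nu> b. bij \<nu> \<and>
     (\<forall>w. length w = n \<longrightarrow> g w = \<nu> (f (map (inv \<nu>) (if b then rev w else w)))))"

definition global :: "int set \<Rightarrow> ('a list \<Rightarrow> 'a) \<Rightarrow> 'a gmap" where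
  "global M f = (\<lambda>x i. f (map (\<lambda>m. x (i + m)) (sorted_list_of_set M)))"

definition G :: "nat \<Rightarrow> 'a gmap set" where
  "G n = {global {1..int n} f | f. f \<in> Lrules n}"

definition Gbar :: "nat \<Rightarrow> 'a gmap set" where
  "Gbar n = {global {1..int n} f | f. f \<in> Lbar n}"

definition shift :: "'a cfg \<Rightarrow> 'a cfg" where
  "shift x = (\<lambda>i. x (i + 1))"

definition refl_cfg :: "'a cfg \<Rightarrow> 'a cfg" where
  "refl_cfg x = (\<lambda>i. x (- i))"

definition shift_hat :: "'a gmap \<Rightarrow> 'a gmap" where
  "shift_hat \<Phi> = shift \<circ> \<Phi>"

definition refl_hat :: "'a gmap \<Rightarrow> 'a gmap" where
  "refl_hat \<Phi> = refl_cfg \<circ> \<Phi> \<circ> refl_cfg"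

definition perm_hat :: "('a \<Rightarrow> 'a) \<Rightarrow> 'a gmap \<Rightarrow> 'a gmap" where
  "perm_hat \<nu> \<Phi> = (\<lambda>x. \<nu> \<circ> \<Phi> (inv \<nu> \<circ> x))"

text \<open>Orbit relation of the group generated by a set T of bijections:
  equivalence closure of the one-step relation.\<close>
definition gen_orbit :: "('b \<Rightarrow> 'b) set \<Rightarrow> 'b \<Rightarrow> 'b \<Rightarrow> bool" where
  "gen_orbit T = (\<lambda>x y. \<exists>t\<in>T. y = t x \<or> x = t y)\<^sup>*\<^sup>*"

definition Shat_gens :: "nat \<Rightarrow> ('a gmap \<Rightarrow> 'a gmap) set" where
  "Shat_gens n = {\<lambda>\<Phi>. (shift_hat ^^ (n + 1)) (refl_hat \<Phi>)} \<union> {perm_hat \<nu> | \<nu>. bij \<nu>}"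

definition cong_gens :: "('a gmap \<Rightarrow> 'a gmap) set" where
  "cong_gens = {shift_hat, refl_hat} \<union> {perm_hat \<nu> | \<nu>. bij \<nu>}"

definition gcong :: "'a gmap \<Rightarrow> 'a gmap \<Rightarrow> bool" where
  "gcong = gen_orbit cong_gens"

definition scaled :: "rat \<Rightarrow> 'a gmap \<Rightarrow> 'a gmap \<Rightarrow> bool" where
  "scaled v \<Phi> \<Psi> \<longleftrightarrow> (\<exists>M f. finite M \<and> (\<forall>m\<in>M. v * of_int m \<in> \<int>) \<and>
      \<Phi> = global M f \<and> \<Psi> = global ((\<lambda>m. \<lfloor>v * of_int m\<rfloor>) ` M) f)"

definition gsim :: "'a gmap \<Rightarrow> 'a gmap \<Rightarrow> bool" where
  "gsim \<Phi> \<Psi> \<longleftrightarrow> (\<exists>\<Phi>' \<Psi>' v. v > 0 \<and> gcong \<Phi> \<Phi>' \<and> gcong \<Psi> \<Psi>' \<and> scaled v \<Phi>' \<Psi>')"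

definition quot :: "'b set \<Rightarrow> ('b \<Rightarrow> 'b \<Rightarrow> bool) \<Rightarrow> 'b set set" where
  "quot X R = X // {(x, y). x \<in> X \<and> y \<in> X \<and> R x y}"

end

theory Submission
  imports Defs "HOL-Library.FuncSet"
begin


definition Gl :: "int list \<Rightarrow> ('a list \<Rightarrow> 'a) \<Rightarrow> 'a gmap" where
  "Gl L g = (\<lambda>x i. g (map (\<lambda>m. x (i + m)) L))"

definition iv :: "nat \<Rightarrow> int \<Rightarrow> int list" where
  "iv n k = map (\<lambda>j. k + 1 + int j) [0..<n]"

definition irr :: "nat \<Rightarrow> ('a list \<Rightarrow> 'a) \<Rightarrow> bool" where
  "irr n g \<longleftrightarrow> (\<forall>i<n. \<exists>w a. length w = n \<and> g (w[i := a]) \<noteq> g w)"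

lemma length_iv[simp]: "length (iv n k) = n" by (simp add: iv_def)

lemma nth_iv[simp]: "j < n \<Longrightarrow> iv n k ! j = k + 1 + int j" by (simp add: iv_def)

lemma set_iv: "set (iv n k) = {k+1..k + int n}"
proof (auto simp: iv_def)
  fix x assume "k + 1 \<le> x" "x \<le> k + int n"
  then show "x \<in> (\<lambda>j. k + 1 + int j) ` {0..<n}"
    by (intro image_eqI[of _ _ "nat (x - k - 1)"]) auto
qed

lemma sorted_wrt_iv: "sorted_wrt (<) (iv n k)"
  by (auto simp: sorted_wrt_iff_nth_less)

lemma sorted_iv: "sorted (iv n k)" and distinct_iv: "distinct (iv n k)"
  using sorted_wrt_iv strict_sorted_iff by blast+

lemma global_iv: "global {1..int n} f = Gl (iv n 0) f"
proof -
  have "sorted_list_of_set {1..int n} = iv n 0"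
    by (rule sorted_distinct_set_unique) (auto simp: sorted_iv distinct_iv set_iv)
  then show ?thesis by (simp add: global_def Gl_def)
qed

lemma global_Gl: "global M f = Gl (sorted_list_of_set M) f"
  by (simp add: global_def Gl_def)

lemma shift_Gl: "shift_hat (Gl L g) = Gl (map (\<lambda>m. m + 1) L) g"
  by (auto simp: shift_hat_def shift_def Gl_def fun_eq_iff algebra_simps comp_def)

lemma shiftn_Gl: "(shift_hat ^^ j) (Gl L g) = Gl (map (\<lambda>m. m + int j) L) g"
  by (induction j) (auto simp: shift_Gl comp_def algebra_simps)

lemma refl_Gl: "refl_hat (Gl L g) = Gl (map uminus L) g"
  by (auto simp: refl_hat_def refl_cfg_def Gl_def fun_eq_iff comp_def)

lemma Gl_rev: "Gl L g = Gl (rev L) (\<lambda>w. g (rev w))"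
  by (auto simp: Gl_def fun_eq_iff rev_map)

lemma perm_Gl: "perm_hat \<nu> (Gl L g) = Gl L (\<lambda>w. \<nu> (g (map (inv \<nu>) w)))"
  by (auto simp: perm_hat_def Gl_def fun_eq_iff comp_def)

lemma Gl_ext: "(\<And>w. length w = length L \<Longrightarrow> g w = g' w) \<Longrightarrow> Gl L g = Gl L g'"
  by (auto simp: Gl_def fun_eq_iff)

lemma Gl_eqD: "Gl L g = Gl L' g' \<Longrightarrow> g (map y L) = g' (map y L')"
  by (drule fun_cong[of _ _ y], drule fun_cong[of _ _ 0]) (simp add: Gl_def)

lemma map_shift_iv: "map (\<lambda>m. m + c) (iv n k) = iv n (k + c)"
  by (auto simp: iv_def)

lemma map_uminus_iv: "map uminus (iv n k) = rev (iv n (- k - 1 - int n))"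
  by (rule nth_equalityI) (auto simp: rev_nth)

lemma refl_Gl_iv: "refl_hat (Gl (iv n k) g) = Gl (iv n (- k - 1 - int n)) (\<lambda>w. g (rev w))"
  by (simp add: refl_Gl map_uminus_iv Gl_rev[of "rev _"])

lemma shift_inj: "shift_hat A = shift_hat B \<Longrightarrow> A = B"
proof -
  assume h: "shift_hat A = shift_hat B"
  have "\<And>x i. A x i = B x i"
  proof -
    fix x i
    have "shift_hat A x (i - 1) = shift_hat B x (i - 1)" using h by simp
    then show "A x i = B x i" by (simp add: shift_hat_def shift_def)
  qed
  then show ?thesis by (auto simp: fun_eq_iff)
qed

lemma refl_refl: "refl_hat (refl_hat A) = A"
  by (auto simp: refl_hat_def refl_cfg_def fun_eq_iff)

lemma perm_perm: "bij \<nu> \<Longrightarrow> perm_hat (inv \<nu>) (perm_hat \<nu> A) = A"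
proof -
  assume b: "bij \<nu>"
  have 1: "inv (inv \<nu>) = \<nu>" using b by (simp add: inv_inv_eq)
  have 2: "\<And>z. inv \<nu> (\<nu> z) = z" using b by (simp add: bij_is_inj)
  have 3: "\<And>z. \<nu> (inv \<nu> z) = z" using b by (meson bij_inv_eq_iff)
  show ?thesis by (auto simp: perm_hat_def fun_eq_iff 1 2 3 comp_def)
qed

definition Tn :: "nat \<Rightarrow> 'a gmap \<Rightarrow> 'a gmap" where
  "Tn n = (\<lambda>\<Phi>. (shift_hat ^^ (n + 1)) (refl_hat \<Phi>))"

lemma shiftn_apply: "(shift_hat ^^ j) A x i = A x (i + int j)"
  by (induction j arbitrary: i) (auto simp: shift_hat_def shift_def algebra_simps)

lemma Tn_Tn: "Tn n (Tn n A) = A"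
  unfolding Tn_def fun_eq_iff shiftn_apply by (simp add: refl_hat_def refl_cfg_def shiftn_apply)

lemma Tn_Gl: "Tn n (Gl (iv n 0) g) = Gl (iv n 0) (\<lambda>w. g (rev w))"
  unfolding Tn_def refl_Gl_iv shiftn_Gl map_shift_iv by simp

lemma Shat_gens_eq: "Shat_gens n = {Tn n} \<union> {perm_hat \<nu> | \<nu>. bij \<nu>}"
  by (simp add: Shat_gens_def Tn_def)



lemma revb_map: "(if b then rev (map h w) else map h w) = map h (if b then rev w else w)"
  by (simp add: rev_map)

lemma orbit_refl: "rule_orbit_rel n f f"
  unfolding rule_orbit_rel_def by (rule exI[of _ id], rule exI[of _ False]) simp

lemma orbit_ext: "rule_orbit_rel n f g \<Longrightarrow> (\<And>w. length w = n \<Longrightarrow> g w = g2 w) \<Longrightarrow> rule_orbit_rel n f g2"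
  unfolding rule_orbit_rel_def by metis

lemma orbit_rev: "rule_orbit_rel n f g \<Longrightarrow> rule_orbit_rel n f (\<lambda>w. g (rev w))"
proof -
  assume "rule_orbit_rel n f g"
  then obtain \<nu> b where b: "bij \<nu>" and h: "\<forall>w. length w = n \<longrightarrow> g w = \<nu> (f (map (inv \<nu>) (if b then rev w else w)))"
    unfolding rule_orbit_rel_def by blast
  show ?thesis unfolding rule_orbit_rel_def
    by (rule exI[of _ \<nu>], rule exI[of _ "\<not> b"]) (auto simp: b h)
qed

lemma orbit_perm: "rule_orbit_rel n f g \<Longrightarrow> bij \<mu> \<Longrightarrow> rule_orbit_rel n f (\<lambda>w. \<mu> (g (map (inv \<mu>) w)))"
proof -
  assume "rule_orbit_rel n f g" and bm: "bij \<mu>"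
  then obtain \<nu> b where b: "bij \<nu>" and h: "\<forall>w. length w = n \<longrightarrow> g w = \<nu> (f (map (inv \<nu>) (if b then rev w else w)))"
    unfolding rule_orbit_rel_def by blast
  have i: "inv (\<mu> \<circ> \<nu>) = inv \<nu> \<circ> inv \<mu>" using o_inv_distrib[OF bm b] .
  show ?thesis unfolding rule_orbit_rel_def
    apply (rule exI[of _ "\<mu> \<circ> \<nu>"], rule exI[of _ b])
    using h by (auto simp: bij_comp[OF b bm] i rev_map)
qed

lemma orbit_sym: "rule_orbit_rel n f g \<Longrightarrow> rule_orbit_rel n g f"
proof -
  assume "rule_orbit_rel n f g"
  then obtain \<nu> b where b: "bij \<nu>" and h: "\<forall>w. length w = n \<longrightarrow> g w = \<nu> (f (map (inv \<nu>) (if b then rev w else w)))"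
    unfolding rule_orbit_rel_def by blast
  have ii: "inv (inv \<nu>) = \<nu>" using b by (simp add: inv_inv_eq)
  have c1: "\<And>z. inv \<nu> (\<nu> z) = z" using b by (simp add: bij_is_inj)
  have c2: "\<And>z. \<nu> (inv \<nu> z) = z" using b by (meson bij_inv_eq_iff)
  have "\<forall>w. length w = n \<longrightarrow> f w = inv \<nu> (g (map (inv (inv \<nu>)) (if b then rev w else w)))"
  proof (intro allI impI)
    fix w :: "'a list" assume l: "length w = n"
    have "g (map \<nu> (if b then rev w else w)) = \<nu> (f w)"
      using h l by (auto simp: rev_map comp_def c1)
    then show "f w = inv \<nu> (g (map (inv (inv \<nu>)) (if b then rev w else w)))"
      by (simp add: ii c1)
  qed
  then show ?thesis unfolding rule_orbit_rel_def
    using bij_imp_bij_inv[OF b] by blast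
qed

lemma orbit_trans: "rule_orbit_rel n f g \<Longrightarrow> rule_orbit_rel n g h \<Longrightarrow> rule_orbit_rel n f h"
proof -
  assume fg: "rule_orbit_rel n f g" and "rule_orbit_rel n g h"
  then obtain \<nu> b where b: "bij \<nu>" and h: "\<forall>w. length w = n \<longrightarrow> h w = \<nu> (g (map (inv \<nu>) (if b then rev w else w)))"
    unfolding rule_orbit_rel_def by blast
  define g1 where "g1 = (\<lambda>w. g (if b then rev w else w))"
  have "rule_orbit_rel n f g1" using fg orbit_rev[OF fg] unfolding g1_def by (cases b) auto
  then have "rule_orbit_rel n f (\<lambda>w. \<nu> (g1 (map (inv \<nu>) w)))" using orbit_perm b by blast
  then show ?thesis by (rule orbit_ext) (auto simp: h g1_def rev_map)
qed

lemma irr_ext: "irr n g \<Longrightarrow> (\<And>w. length w = n \<Longrightarrow> g w = g2 w) \<Longrightarrow> irr n g2"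
  unfolding irr_def by (metis length_list_update)

lemma irr_rev: "irr n g \<Longrightarrow> irr n (\<lambda>w. g (rev w))"
  unfolding irr_def
proof (intro allI impI)
  fix i assume H: "\<forall>i<n. \<exists>w a. length w = n \<and> g (w[i := a]) \<noteq> g w" and i: "i < n"
  have "n - i - 1 < n" using i by simp
  then obtain w a where w: "length w = n" "g (w[n - i - 1 := a]) \<noteq> g w"
    using H by blast
  have "rev ((rev w)[i := a]) = w[n - i - 1 := a]"
    using rev_update[of i "rev w" a] i w by simp
  then show "\<exists>w a. length w = n \<and> g (rev (w[i := a])) \<noteq> g (rev w)"
    using w by (intro exI[of _ "rev w"] exI[of _ a]) auto
qed

lemma irr_perm: "irr n g \<Longrightarrow> bij \<nu> \<Longrightarrow> irr n (\<lambda>w. \<nu> (g (map (inv \<nu>) w)))"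
  unfolding irr_def
proof (intro allI impI)
  fix i assume H: "\<forall>i<n. \<exists>w a. length w = n \<and> g (w[i := a]) \<noteq> g w" and i: "i < n" and b: "bij \<nu>"
  then obtain w a where w: "length w = n" "g (w[i := a]) \<noteq> g w" by blast
  have c1: "\<And>z. inv \<nu> (\<nu> z) = z" using b by (simp add: bij_is_inj)
  have m: "map (inv \<nu>) (map \<nu> w) = w" by (simp add: comp_def c1)
  have inj: "inj \<nu>" using b bij_is_inj by blast
  show "\<exists>w a. length w = n \<and> \<nu> (g (map (inv \<nu>) (w[i := a]))) \<noteq> \<nu> (g (map (inv \<nu>) w))"
    apply (intro exI[of _ "map \<nu> w"] exI[of _ "\<nu> a"])
    using w inj by (auto simp: map_update m c1 inj_eq)
qed

lemma irr_orbit: "irr n f \<Longrightarrow> rule_orbit_rel n f g \<Longrightarrow> irr n g"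
proof -
  assume f: "irr n f" and "rule_orbit_rel n f g"
  then obtain \<nu> b where b: "bij \<nu>" and h: "\<forall>w. length w = n \<longrightarrow> g w = \<nu> (f (map (inv \<nu>) (if b then rev w else w)))"
    unfolding rule_orbit_rel_def by blast
  define g1 where "g1 = (\<lambda>w. f (if b then rev w else w))"
  have "irr n g1" using f irr_rev[OF f] unfolding g1_def by (cases b) auto
  then have "irr n (\<lambda>w. \<nu> (g1 (map (inv \<nu>) w)))" using irr_perm b by blast
  then show ?thesis by (rule irr_ext) (auto simp: h g1_def rev_map)
qed

lemma Lbar_irr: "f \<in> Lbar n \<Longrightarrow> irr n f"
  by (simp add: Lbar_def irr_def)



lemma gen_orbit_refl: "gen_orbit T x x"
  by (simp add: gen_orbit_def)

lemma gen_orbit_step: "t \<in> T \<Longrightarrow> gen_orbit T x (t x)"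
  unfolding gen_orbit_def by (rule r_into_rtranclp) blast

lemma gen_orbit_trans: "gen_orbit T x y \<Longrightarrow> gen_orbit T y z \<Longrightarrow> gen_orbit T x z"
  unfolding gen_orbit_def by (rule rtranclp_trans)

lemma gen_orbit_sym: "gen_orbit T x y \<Longrightarrow> gen_orbit T y x"
  unfolding gen_orbit_def
proof (induction rule: rtranclp_induct)
  case base then show ?case by simp
next
  case (step y z)
  have "(\<lambda>x y. \<exists>t\<in>T. y = t x \<or> x = t y) z y" using step(2) by blast
  then show ?case using step(3) by (rule converse_rtranclp_into_rtranclp)
qed

lemma gen_orbit_mono:
  assumes "\<And>t x. t \<in> T1 \<Longrightarrow> gen_orbit T2 x (t x)"
  shows "gen_orbit T1 x y \<Longrightarrow> gen_orbit T2 x y"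
  unfolding gen_orbit_def[of T1]
proof (induction rule: rtranclp_induct)
  case base then show ?case by (simp add: gen_orbit_refl)
next
  case (step y z)
  then obtain t where t: "t \<in> T1" "z = t y \<or> y = t z" by blast
  then have "gen_orbit T2 y z" using assms gen_orbit_sym by metis
  then show ?case using step(3) gen_orbit_trans by metis
qed

lemma gen_orbit_induct:
  assumes "gen_orbit T x y" "P x"
    and "\<And>t a b. t \<in> T \<Longrightarrow> P a \<Longrightarrow> b = t a \<or> a = t b \<Longrightarrow> P b"
  shows "P y"
  using assms(1,2) unfolding gen_orbit_def
proof (induction rule: rtranclp_induct)
  case base then show ?case by simp
next
  case (step y z)
  then show ?case using assms(3) by blast
qed

lemma cong_shiftn: "gen_orbit cong_gens A ((shift_hat ^^ j) A)"
proof (induction j)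
  case 0 then show ?case by (simp add: gen_orbit_refl)
next
  case (Suc j)
  have "gen_orbit cong_gens ((shift_hat ^^ j) A) (shift_hat ((shift_hat ^^ j) A))"
    by (rule gen_orbit_step) (simp add: cong_gens_def)
  then show ?case using Suc gen_orbit_trans by fastforce
qed

lemma Shat_cong: "gen_orbit (Shat_gens n) A B \<Longrightarrow> gcong A B"
  unfolding gcong_def
proof (rule gen_orbit_mono)
  fix t x assume "t \<in> Shat_gens n"
  then consider "t = Tn n" | \<nu> where "bij \<nu>" "t = perm_hat \<nu>" by (auto simp: Shat_gens_eq)
  then show "gen_orbit cong_gens x (t x)"
  proof cases
    case 1
    have "gen_orbit cong_gens x (refl_hat x)" by (rule gen_orbit_step) (simp add: cong_gens_def)
    then show ?thesis using 1 cong_shiftn gen_orbit_trans unfolding Tn_def by fastforce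
  next
    case 2 then show ?thesis by (intro gen_orbit_step) (auto simp: cong_gens_def)
  qed
qed

lemma cong_inv:
  assumes "gcong (Gl (iv n 0) f) B"
  shows "\<exists>k g. rule_orbit_rel n f g \<and> B = Gl (iv n k) g"
  using assms[unfolded gcong_def]
proof (rule gen_orbit_induct)
  show "\<exists>k g. rule_orbit_rel n f g \<and> Gl (iv n 0) f = Gl (iv n k) g"
    using orbit_refl by blast
next
  fix t a b
  assume t: "t \<in> cong_gens" and "\<exists>k g. rule_orbit_rel n f g \<and> a = Gl (iv n k) g"
    and ab: "b = t a \<or> a = t b"
  then obtain k g where o: "rule_orbit_rel n f g" and a: "a = Gl (iv n k) g" by blast
  from t consider "t = shift_hat" | "t = refl_hat" | \<nu> where "bij \<nu>" "t = perm_hat \<nu>"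
    by (auto simp: cong_gens_def)
  then show "\<exists>k g. rule_orbit_rel n f g \<and> b = Gl (iv n k) g"
  proof cases
    case 1
    show ?thesis
    proof (cases "b = t a")
      case True then show ?thesis using 1 o a by (auto simp: shift_Gl map_shift_iv)
    next
      case False
      then have "shift_hat b = shift_hat (Gl (iv n (k - 1)) g)" using ab 1 a by (simp add: shift_Gl map_shift_iv)
      then show ?thesis using shift_inj o by blast
    qed
  next
    case 2
    then have "b = refl_hat a" using ab refl_refl by metis
    then show ?thesis using a orbit_rev[OF o] by (auto simp: refl_Gl_iv)
  next
    case (3 \<nu>)
    show ?thesis
    proof (cases "b = t a")
      case True then show ?thesis using 3 a orbit_perm[OF o 3(1)] by (auto simp: perm_Gl)
    next
      case False
      then have "b = perm_hat (inv \<nu>) a" using ab 3 perm_perm by metis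
      then show ?thesis using a orbit_perm[OF o bij_imp_bij_inv[OF 3(1)]] by (auto simp: perm_Gl)
    qed
  qed
qed

lemma Shat_inv:
  assumes "gen_orbit (Shat_gens n) (Gl (iv n 0) f) B"
  shows "\<exists>g. rule_orbit_rel n f g \<and> B = Gl (iv n 0) g"
  using assms
proof (rule gen_orbit_induct)
  show "\<exists>g. rule_orbit_rel n f g \<and> Gl (iv n 0) f = Gl (iv n 0) g"
    using orbit_refl by blast
next
  fix t a b
  assume t: "t \<in> Shat_gens n" and "\<exists>g. rule_orbit_rel n f g \<and> a = Gl (iv n 0) g"
    and ab: "b = t a \<or> a = t b"
  then obtain g where o: "rule_orbit_rel n f g" and a: "a = Gl (iv n 0) g" by blast
  from t consider "t = Tn n" | \<nu> where "bij \<nu>" "t = perm_hat \<nu>"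
    by (auto simp: Shat_gens_eq)
  then show "\<exists>g. rule_orbit_rel n f g \<and> b = Gl (iv n 0) g"
  proof cases
    case 1
    then have "b = Tn n a" using ab Tn_Tn by metis
    then show ?thesis using a orbit_rev[OF o] by (auto simp: Tn_Gl)
  next
    case (2 \<nu>)
    show ?thesis
    proof (cases "b = t a")
      case True then show ?thesis using 2 a orbit_perm[OF o 2(1)] by (auto simp: perm_Gl)
    next
      case False
      then have "b = perm_hat (inv \<nu>) a" using ab 2 perm_perm by metis
      then show ?thesis using a orbit_perm[OF o bij_imp_bij_inv[OF 2(1)]] by (auto simp: perm_Gl)
    qed
  qed
qed

lemma orbit_Shat:
  assumes "rule_orbit_rel n f h"
  shows "gen_orbit (Shat_gens n) (Gl (iv n 0) f) (Gl (iv n 0) h)"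
proof -
  obtain \<nu> b where b: "bij \<nu>" and h: "\<forall>w. length w = n \<longrightarrow> h w = \<nu> (f (map (inv \<nu>) (if b then rev w else w)))"
    using assms unfolding rule_orbit_rel_def by blast
  define f1 where "f1 = (\<lambda>w. f (if b then rev w else w))"
  have 1: "gen_orbit (Shat_gens n) (Gl (iv n 0) f) (Gl (iv n 0) f1)"
  proof (cases b)
    case True
    have "gen_orbit (Shat_gens n) (Gl (iv n 0) f) (Tn n (Gl (iv n 0) f))"
      by (rule gen_orbit_step) (simp add: Shat_gens_eq)
    then show ?thesis using True by (simp add: Tn_Gl f1_def)
  next
    case False then show ?thesis by (simp add: f1_def gen_orbit_refl)
  qed
  have "gen_orbit (Shat_gens n) (Gl (iv n 0) f1) (perm_hat \<nu> (Gl (iv n 0) f1))"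
    by (rule gen_orbit_step) (auto simp: Shat_gens_eq b)
  also have "perm_hat \<nu> (Gl (iv n 0) f1) = Gl (iv n 0) h"
    unfolding perm_Gl by (rule Gl_ext) (auto simp: h f1_def rev_map)
  finally show ?thesis using 1 gen_orbit_trans by metis
qed

lemma exists_cfg: "distinct Q \<Longrightarrow> length w = length Q \<Longrightarrow> \<exists>y. map y Q = w"
proof (induction Q arbitrary: w)
  case Nil then show ?case by simp
next
  case (Cons q Q)
  then obtain a w' where w: "w = a # w'" "length w' = length Q" by (cases w) auto
  then obtain y where y: "map y Q = w'" using Cons by auto
  have m: "map (y(q := a)) Q = map y Q" using Cons(2) by (intro map_cong) auto
  have "map (y(q := a)) (q # Q) = a # map (y(q:=a)) Q" by simp
  then show ?case using w y m by metis
qed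

lemma key:
  fixes g g' :: "'a list \<Rightarrow> 'a" and P Q :: "int list"
  assumes eq: "\<And>y. g (map y P) = g' (map y Q)"
    and lP: "length P = n" and lQ: "length Q = n" and sP: "sorted P" and sQ: "sorted Q"
    and dQ: "distinct Q" and irr: "irr n g'"
  shows "P = Q \<and> (\<forall>w. length w = n \<longrightarrow> g w = g' w)"
proof -
  have sub: "set Q \<subseteq> set P"
  proof
    fix q assume q: "q \<in> set Q"
    then obtain i where i: "i < n" "Q ! i = q" using lQ by (auto simp: in_set_conv_nth)
    obtain w a where w: "length w = n" "g' (w[i := a]) \<noteq> g' w" using irr i unfolding irr_def by blast
    obtain y where y: "map y Q = w" using exists_cfg[OF dQ] w lQ by metis
    have "map (y(q := a)) Q = w[i := a]"
      using y i dQ lQ by (auto intro!: nth_equalityI simp: nth_list_update nth_eq_iff_index_eq)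
    show "q \<in> set P"
    proof (rule ccontr)
      assume "q \<notin> set P"
      then have "map (y(q := a)) P = map y P" by (intro map_cong) auto
      then have "g' (map (y(q := a)) Q) = g' (map y Q)" using eq by metis
      then show False using w y \<open>map (y(q := a)) Q = w[i := a]\<close> by simp
    qed
  qed
  have cQ: "card (set Q) = n" using dQ lQ distinct_card by blast
  have "card (set P) \<le> n" using card_length lP by metis
  moreover have "card (set Q) \<le> card (set P)" using sub card_mono by blast
  ultimately have cP: "card (set P) = n" using cQ by simp
  then have dP: "distinct P" using card_distinct lP by metis
  have "set P = set Q" using card_subset_eq[OF finite_set sub] cP cQ by simp
  then have PQ: "P = Q" using sorted_distinct_set_unique sP sQ dP dQ by metis
  have "\<forall>w. length w = n \<longrightarrow> g w = g' w"
  proof (intro allI impI)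
    fix w :: "'a list" assume "length w = n"
    then obtain y where "map y Q = w" using exists_cfg[OF dQ] lQ by metis
    then show "g w = g' w" using eq PQ by metis
  qed
  then show ?thesis using PQ by simp
qed



lemma sl_image:
  assumes M: "finite M" and sm: "\<And>a b. a \<in> M \<Longrightarrow> b \<in> M \<Longrightarrow> a < b \<Longrightarrow> s a < s b"
  shows "sorted_list_of_set (s ` M) = map s (sorted_list_of_set M)"
proof -
  have "sorted_wrt (<) (map s (sorted_list_of_set M))"
    unfolding sorted_wrt_map
    by (rule sorted_wrt_mono_rel[OF _ strict_sorted_list_of_set]) (use sm M in auto)
  then have "sorted (map s (sorted_list_of_set M)) \<and> distinct (map s (sorted_list_of_set M))"
    using strict_sorted_iff by blast
  then show ?thesis
    by (intro sorted_distinct_set_unique) (auto simp: M)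
qed

lemma Gl_Gl_eq: "Gl L g = Gl L' g' \<Longrightarrow> (\<forall>y. g (map y L) = g' (map y L'))"
  using Gl_eqD by metis

lemma gsim_Gbar:
  fixes f h :: "'a list \<Rightarrow> 'a"
  assumes f: "irr n f" and h: "irr n h"
    and gs: "gsim (Gl (iv n 0) f) (Gl (iv n 0) h)"
  shows "rule_orbit_rel n f h"
proof -
  obtain A B v where v: "v > 0" and cA: "gcong (Gl (iv n 0) f) A" and cB: "gcong (Gl (iv n 0) h) B"
    and sc: "scaled v A B" using gs unfolding gsim_def by blast
  obtain k g where og: "rule_orbit_rel n f g" and A: "A = Gl (iv n k) g" using cong_inv[OF cA] by blast
  obtain k' g' where og': "rule_orbit_rel n h g'" and B: "B = Gl (iv n k') g'" using cong_inv[OF cB] by blast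
  have ig': "irr n g'" using irr_orbit[OF h og'] .
  obtain M f' where M: "finite M" and Mi: "\<forall>m\<in>M. v * of_int m \<in> \<int>"
    and A': "A = global M f'" and B': "B = global ((\<lambda>m. \<lfloor>v * of_int m\<rfloor>) ` M) f'"
    using sc unfolding scaled_def by blast
  define s where "s = (\<lambda>m::int. \<lfloor>v * of_int m\<rfloor>)"
  have smono: "\<And>a b. a \<le> b \<Longrightarrow> s a \<le> s b"
    unfolding s_def using v by (intro floor_mono) (simp add: mult_left_mono)
  have sstrict: "\<And>a b. a \<in> M \<Longrightarrow> b \<in> M \<Longrightarrow> a < b \<Longrightarrow> s a < s b"
  proof -
    fix a b assume a: "a \<in> M" and b: "b \<in> M" and ab: "a < b"
    obtain ia where ia: "v * of_int a = of_int ia" using Mi a Ints_cases by metis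
    obtain ib where ib: "v * of_int b = of_int ib" using Mi b Ints_cases by metis
    have "v * of_int a < v * of_int b" using v ab by simp
    then have "ia < ib" using ia ib by simp
    then show "s a < s b" by (simp add: s_def ia ib)
  qed
  have B'': "B = Gl (map s (sorted_list_of_set M)) f'"
    using B' sl_image[OF M sstrict] by (simp add: global_Gl s_def)
  have A'': "A = Gl (sorted_list_of_set M) f'" using A' by (simp add: global_Gl)
  have eq: "\<And>y. g (map y (map s (iv n k))) = g' (map y (iv n k'))"
  proof -
    fix y :: "int \<Rightarrow> 'a"
    have "g' (map y (iv n k')) = f' (map y (map s (sorted_list_of_set M)))"
      using Gl_Gl_eq[of "iv n k'" g' "map s (sorted_list_of_set M)" f'] B B'' by metis
    also have "\<dots> = f' (map (y \<circ> s) (sorted_list_of_set M))" by simp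
    also have "\<dots> = g (map (y \<circ> s) (iv n k))"
      using Gl_Gl_eq[of "iv n k" g "sorted_list_of_set M" f'] A A'' by metis
    finally show "g (map y (map s (iv n k))) = g' (map y (iv n k'))" by simp
  qed
  have sP: "sorted (map s (iv n k))"
    using sorted_iv[of n k] unfolding sorted_wrt_map by (rule sorted_wrt_mono_rel[rotated]) (use smono in auto)
  have "\<forall>w. length w = n \<longrightarrow> g w = g' w"
    using key[OF eq _ _ sP sorted_iv distinct_iv ig'] by simp
  then have "rule_orbit_rel n f g'" using orbit_ext[OF og] by blast
  then show ?thesis using orbit_trans orbit_sym[OF og'] by blast
qed

lemma cong_Gbar:
  assumes h: "irr n h" and c: "gcong (Gl (iv n 0) f) (Gl (iv n 0) h)"
  shows "rule_orbit_rel n f h"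
proof -
  obtain k g where og: "rule_orbit_rel n f g" and e: "Gl (iv n 0) h = Gl (iv n k) g" using cong_inv[OF c] by blast
  have "\<forall>w. length w = n \<longrightarrow> g w = h w"
    using key[of g "iv n k" h "iv n 0" n] Gl_Gl_eq[OF e] h sorted_iv distinct_iv by simp
  then show ?thesis using orbit_ext[OF og] by blast
qed

lemma Shat_G:
  assumes h: "\<And>w. length w \<noteq> n \<Longrightarrow> h w = undefined"
  shows "gen_orbit (Shat_gens n) (Gl (iv n 0) f) (Gl (iv n 0) h) \<longleftrightarrow> rule_orbit_rel n f h"
proof
  assume "gen_orbit (Shat_gens n) (Gl (iv n 0) f) (Gl (iv n 0) h)"
  then obtain g where og: "rule_orbit_rel n f g" and e: "Gl (iv n 0) h = Gl (iv n 0) g" using Shat_inv by blast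
  have "\<forall>w. length w = n \<longrightarrow> g w = h w"
  proof (intro allI impI)
    fix w :: "'a list" assume "length w = n"
    then obtain y where "map y (iv n 0) = w" using exists_cfg[OF distinct_iv] by (metis length_iv)
    then show "g w = h w" using Gl_Gl_eq[OF e] by metis
  qed
  then show "rule_orbit_rel n f h" using orbit_ext[OF og] by blast
next
  assume "rule_orbit_rel n f h" then show "gen_orbit (Shat_gens n) (Gl (iv n 0) f) (Gl (iv n 0) h)"
    by (rule orbit_Shat)
qed

lemma global_inj:
  assumes f: "f \<in> Lrules n" and g: "g \<in> Lrules n" and e: "global {1..int n} f = global {1..int n} g"
  shows "f = g"
proof
  fix w :: "'a list"
  show "f w = g w"
  proof (cases "length w = n")
    case True
    then obtain y where "map y (iv n 0) = w" using exists_cfg[OF distinct_iv] by (metis length_iv)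
    then show ?thesis using Gl_Gl_eq e by (metis global_iv)
  next
    case False then show ?thesis using f g by (simp add: Lrules_def)
  qed
qed

lemma quot_eq: "quot X R = (\<lambda>x. {y\<in>X. R x y}) ` X"
  unfolding quot_def quotient_def by auto

lemma card_quot_bij:
  assumes inj: "inj_on F X" and Y: "Y = F ` X"
    and rel: "\<And>x x'. x \<in> X \<Longrightarrow> x' \<in> X \<Longrightarrow> R x x' \<longleftrightarrow> S (F x) (F x')"
  shows "card (quot X R) = card (quot Y S)"
proof -
  have cls: "\<And>x. x \<in> X \<Longrightarrow> {y\<in>Y. S (F x) y} = F ` {x'\<in>X. R x x'}"
    using rel Y by auto
  have "quot Y S = (\<lambda>x. {y\<in>Y. S (F x) y}) ` X" unfolding quot_eq Y by auto
  also have "\<dots> = (image F) ` quot X R" unfolding quot_eq using cls by (auto simp: image_image)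
  finally have e: "quot Y S = (image F) ` quot X R" .
  have "inj_on (image F) (quot X R)"
    unfolding quot_eq by (rule inj_onI) (auto simp: inj_on_image_eq_iff[OF inj])
  then show ?thesis using e card_image by metis
qed

lemma quot_cong: "(\<And>x y. x \<in> X \<Longrightarrow> y \<in> X \<Longrightarrow> R x y \<longleftrightarrow> S x y) \<Longrightarrow> quot X R = quot X S"
  unfolding quot_eq by auto

lemma card_quot_le:
  assumes fin: "finite X" and refl: "\<And>x. x \<in> X \<Longrightarrow> R x x"
    and inv: "\<And>x x' y. x \<in> X \<Longrightarrow> x' \<in> X \<Longrightarrow> y \<in> X \<Longrightarrow> R x x' \<Longrightarrow> S x' y \<longleftrightarrow> S x y"
  shows "card (quot X S) \<le> card (quot X R)"
proof -
  have "quot X S \<subseteq> (\<lambda>C. {y\<in>X. \<exists>x\<in>C. S x y}) ` quot X R"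
  proof
    fix A assume "A \<in> quot X S"
    then obtain x where x: "x \<in> X" and A: "A = {y\<in>X. S x y}" unfolding quot_eq by blast
    have "{y\<in>X. \<exists>x'\<in>{x'\<in>X. R x x'}. S x' y} = A"
      using A x refl inv by blast
    then show "A \<in> (\<lambda>C. {y\<in>X. \<exists>x\<in>C. S x y}) ` quot X R"
      unfolding quot_eq using x by blast
  qed
  moreover have "finite (quot X R)" unfolding quot_eq using fin by simp
  ultimately show ?thesis by (meson card_image_le card_mono finite_imageI order_trans)
qed

lemma card_quot_sub:
  assumes fin: "finite Y" and sub: "X \<subseteq> Y"
  shows "card (quot X R) \<le> card (quot Y R)"
proof -
  have "quot X R \<subseteq> (\<lambda>A. A \<inter> X) ` quot Y R"
    unfolding quot_eq using sub by blast
  moreover have "finite (quot Y R)" unfolding quot_eq using fin by simp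
  ultimately show ?thesis by (meson card_image_le card_mono finite_imageI order_trans)
qed

lemma finite_Lrules: "finite (Lrules n :: ('a::finite list \<Rightarrow> 'a) set)"
proof -
  let ?W = "{w :: 'a list. length w = n}"
  have fW: "finite ?W" using finite_lists_length_eq[of "UNIV :: 'a set" n] by simp
  have "inj_on (\<lambda>f. restrict f ?W) (Lrules n)"
  proof (rule inj_onI)
    fix f g :: "'a list \<Rightarrow> 'a" assume "f \<in> Lrules n" "g \<in> Lrules n" "restrict f ?W = restrict g ?W"
    note h = this
    show "f = g"
    proof
      fix w :: "'a list"
      show "f w = g w"
      proof (cases "length w = n")
        case True then show ?thesis using fun_cong[OF h(3), of w] by simp
      next
        case False then show ?thesis using h(1,2) by (simp add: Lrules_def)
      qed
    qed
  qed
  moreover have "(\<lambda>f. restrict f ?W) ` Lrules n \<subseteq> PiE ?W (\<lambda>_. UNIV)" by (simp add: image_subset_iff del: restrict_apply)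
  moreover have "finite (PiE ?W (\<lambda>_. UNIV :: 'a set))" using fW by (intro finite_PiE) auto
  ultimately show ?thesis using finite_imageD finite_subset by metis
qed

lemma gcong_refl: "gcong A A" unfolding gcong_def by (rule gen_orbit_refl)
lemma gcong_sym: "gcong A B \<Longrightarrow> gcong B A" unfolding gcong_def by (rule gen_orbit_sym)
lemma gcong_trans: "gcong A B \<Longrightarrow> gcong B C \<Longrightarrow> gcong A C" unfolding gcong_def by (rule gen_orbit_trans)

lemma gcong_gsim: "A \<in> G n \<Longrightarrow> gcong A B \<Longrightarrow> gsim A B"
proof -
  assume "A \<in> G n" "gcong A B"
  then obtain f where A: "A = global {1..int n} f" unfolding G_def by blast
  have "scaled 1 A A" unfolding scaled_def
    by (rule exI[of _ "{1..int n}"], rule exI[of _ f]) (auto simp: A)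
  then show "gsim A B" unfolding gsim_def using gcong_refl gcong_sym[OF \<open>gcong A B\<close>]
    by (intro exI[of _ A] exI[of _ A] exI[of _ "1::rat"]) auto
qed



lemma gsim_cong_inv: "gcong x x' \<Longrightarrow> gsim x' y \<longleftrightarrow> gsim x y"
  unfolding gsim_def using gcong_trans gcong_sym by metis

theorem proposition12:
  fixes n :: nat
  shows "card (quot (Lbar n :: ('a::finite list \<Rightarrow> 'a) set) (rule_orbit_rel n))
           = card (quot (Gbar n :: 'a gmap set) (gen_orbit (Shat_gens n)))
       \<and> card (quot (Gbar n :: 'a gmap set) (gen_orbit (Shat_gens n)))
           = card (quot (Gbar n :: 'a gmap set) gsim)
       \<and> card (quot (Gbar n :: 'a gmap set) gsim)
           = card (quot (Gbar n :: 'a gmap set) gcong)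
       \<and> card (quot (Lrules n :: ('a list \<Rightarrow> 'a) set) (rule_orbit_rel n))
           = card (quot (G n :: 'a gmap set) (gen_orbit (Shat_gens n)))
       \<and> card (quot (Gbar n :: 'a gmap set) (gen_orbit (Shat_gens n)))
           \<le> card (quot (G n :: 'a gmap set) gsim)
       \<and> card (quot (G n :: 'a gmap set) gsim)
           \<le> card (quot (G n :: 'a gmap set) gcong)
       \<and> card (quot (G n :: 'a gmap set) gcong)
           \<le> card (quot (G n :: 'a gmap set) (gen_orbit (Shat_gens n)))"
proof -
  define F :: "('a list \<Rightarrow> 'a) \<Rightarrow> 'a gmap" where "F = (\<lambda>f. Gl (iv n 0) f)"
  have Fg: "\<And>f. global {1..int n} f = F f" by (simp add: F_def global_iv)
  have LL: "Lbar n \<subseteq> Lrules n" by (auto simp: Lbar_def)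
  have GF: "G n = F ` Lrules n" unfolding G_def Fg by blast
  have GbF: "Gbar n = F ` Lbar n" unfolding Gbar_def Fg by blast
  have injL: "inj_on F (Lrules n)" by (rule inj_onI) (metis global_inj Fg)
  have injLb: "inj_on F (Lbar n)" using inj_on_subset[OF injL LL] .
  have undefL: "\<And>h w. h \<in> Lrules n \<Longrightarrow> length w \<noteq> n \<Longrightarrow> h w = undefined" by (simp add: Lrules_def)
  have relL: "\<And>f h. f \<in> Lrules n \<Longrightarrow> h \<in> Lrules n \<Longrightarrow>
      rule_orbit_rel n f h \<longleftrightarrow> gen_orbit (Shat_gens n) (F f) (F h)"
    unfolding F_def using Shat_G undefL by metis
  have finG: "finite (G n :: 'a gmap set)" unfolding GF using finite_Lrules by blast
  have GbG: "Gbar n \<subseteq> (G n :: 'a gmap set)" unfolding GF GbF using LL by blast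
  have GinG: "\<And>x :: 'a gmap. x \<in> Gbar n \<Longrightarrow> x \<in> G n" using GbG by blast
  have agree: "\<And>x y :: 'a gmap. x \<in> Gbar n \<Longrightarrow> y \<in> Gbar n \<Longrightarrow>
      (gen_orbit (Shat_gens n) x y \<longrightarrow> gcong x y) \<and> (gcong x y \<longrightarrow> gsim x y)
      \<and> (gsim x y \<longrightarrow> gen_orbit (Shat_gens n) x y)"
  proof -
    fix x y :: "'a gmap" assume x: "x \<in> Gbar n" and y: "y \<in> Gbar n"
    then obtain f h where f: "f \<in> Lbar n" and h: "h \<in> Lbar n" and xf: "x = F f" and yh: "y = F h"
      unfolding GbF by blast
    have "gsim x y \<longrightarrow> gen_orbit (Shat_gens n) x y"
      using gsim_Gbar[OF Lbar_irr[OF f] Lbar_irr[OF h]] orbit_Shat xf yh F_def by metis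
    then show "?thesis x y" using Shat_cong gcong_gsim[OF GinG[OF x]] by blast
  qed
  have q1: "quot (Gbar n :: 'a gmap set) (gen_orbit (Shat_gens n)) = quot (Gbar n) gsim"
    by (rule quot_cong) (metis agree)
  have q2: "quot (Gbar n :: 'a gmap set) gsim = quot (Gbar n) gcong"
    by (rule quot_cong) (metis agree)
  have c1: "card (quot (Lbar n :: ('a::finite list \<Rightarrow> 'a) set) (rule_orbit_rel n))
           = card (quot (Gbar n :: 'a gmap set) (gen_orbit (Shat_gens n)))"
    by (rule card_quot_bij[OF injLb GbF]) (use relL LL in blast)
  have c4: "card (quot (Lrules n :: ('a list \<Rightarrow> 'a) set) (rule_orbit_rel n))
           = card (quot (G n :: 'a gmap set) (gen_orbit (Shat_gens n)))"
    by (rule card_quot_bij[OF injL GF]) (use relL in blast)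
  have c5: "card (quot (Gbar n :: 'a gmap set) (gen_orbit (Shat_gens n)))
           \<le> card (quot (G n :: 'a gmap set) gsim)"
    unfolding q1 by (rule card_quot_sub[OF finG GbG])
  have c6: "card (quot (G n :: 'a gmap set) gsim) \<le> card (quot (G n :: 'a gmap set) gcong)"
    by (rule card_quot_le[OF finG]) (auto simp: gcong_refl gsim_cong_inv)
  have c7: "card (quot (G n :: 'a gmap set) gcong)
           \<le> card (quot (G n :: 'a gmap set) (gen_orbit (Shat_gens n)))"
    by (rule card_quot_le[OF finG]) (auto simp: gen_orbit_refl dest: Shat_cong intro: gcong_trans gcong_sym)
  show ?thesis using c1 c4 c5 c6 c7 q1 q2 by simp
qed

end
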